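(* Let $k \in \mathbb{Z}_{\geq 0}$ and let $\gamma_X = (X, d_X(\cdot))$ be a $(2k+2)$-DMS. Put $\mathbb{V} = H_k(\mathcal{R}^{\mathrm{lev}}(\gamma_X)) : \mathbf{Dyn} \to \mathbf{Vec}$. Then for any $p, q \in \operatorname{supp} \mathbb{V}$ with $p \leq q$, we have $\mathcal{R}^{\mathrm{lev}}(\gamma_X)(p) = \mathcal{R}^{\mathrm{lev}}(\gamma_X)(q)$ as abstract simplicial complexes, and the structure map $\mathbb{V}(p \leq q)$ is an isomorphism.
   Context: A dynamic metric space (DMS) $\gamma_X = (X, d_X(\cdot))$ is a finite set $X$ with a function $d_X : \mathbb{R} \times X \times X \to \mathbb{R}_{\geq 0}$ such that for each $t$, $d_X(t)$ is a pseudometric on $X$, and for each $x,x'$ the map $t \mapsto d_X(t)(x,x')$ is continuous. An $n$-DMS is a DMS with $|X| = n$. For a compact interval $I \subset \mathbb{R}$, $d_X(I)(x,x') := \inf_{t \in I} d_X(t)(x,x')$; this is a semimetric (symmetric, zero on the diagonal). For a semimetric $d$ on $X$ and $\delta \geq 0$, the Rips complex $\mathcal{R}_\delta(d)$ is the abstract simplicial complex on $X$ whose simplices are the finite nonempty $\sigma \subseteq X$ with $d(x,y) \leq \delta$ for all $x,y \in \sigma$. $\mathbf{Dyn}$ is the poset of pairs $(I,\delta)$ with $I$ a compact interval of $\mathbb{R}$ and $\delta \ge 0$, ordered by $(I,\delta) \leq (I',\delta')$ iff $I \subseteq I'$ and $\delta \leq \delta'$. The spatiotemporal Rips filtration $\mathcal{R}^{\mathrm{lev}}(\gamma_X)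 : \mathbf{Dyn} \to \mathbf{Simp}$ sends $(I,\delta)$ to $\mathcal{R}_\delta(d_X(I))$ and relations to inclusions; $H_k(\mathcal{R}^{\mathrm{lev}}(\gamma_X))$ is its composition with degree-$k$ simplicial homology over a fixed field $\mathbb{F}$. For such a $(2k+2)$-DMS, each $\mathbb{V}(p)$ has dimension $0$ or $1$, and $\operatorname{supp}\mathbb{V} := \{p \in \mathbf{Dyn} : \mathbb{V}(p) \cong \mathbb{F}\}$. *)

theory Defs
  imports "HOL-Analysis.Analysis"
begin

definition pseudometric_on :: "'v set \<Rightarrow> ('v \<Rightarrow> 'v \<Rightarrow> real) \<Rightarrow> bool" where
  "pseudometric_on X d \<longleftrightarrow>
     (\<forall>x\<in>X. d x x = 0) \<and>
     (\<forall>x\<in>X. \<forall>y\<in>X. 0 \<le> d x y \<and> d x y = d y x) \<and>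
     (\<forall>x\<in>X. \<forall>y\<in>X. \<forall>z\<in>X. d x z \<le> d x y + d y z)"

definition is_DMS :: "'v set \<Rightarrow> (real \<Rightarrow> 'v \<Rightarrow> 'v \<Rightarrow> real) \<Rightarrow> bool" where
  "is_DMS X d \<longleftrightarrow> finite X \<and> (\<forall>t. pseudometric_on X (d t)) \<and>
     (\<forall>x\<in>X. \<forall>y\<in>X. continuous_on UNIV (\<lambda>t. d t x y))"

text \<open>An element ((a,b),delta) stands for the pair ([a,b], delta).\<close>
type_synonym dyn = "(real \<times> real) \<times> real"

definition dyn_point :: "dyn \<Rightarrow> bool" where
  "dyn_point p \<longleftrightarrow> fst (fst p) \<le> snd (fst p) \<and> 0 \<le> snd p"

definition dyn_le :: "dyn \<Rightarrow> dyn \<Rightarrow> bool" where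
  "dyn_le p q \<longleftrightarrow> {fst (fst p)..snd (fst p)} \<subseteq> {fst (fst q)..snd (fst q)} \<and> snd p \<le> snd q"

definition interval_dist :: "(real \<Rightarrow> 'v \<Rightarrow> 'v \<Rightarrow> real) \<Rightarrow> real \<Rightarrow> real \<Rightarrow> 'v \<Rightarrow> 'v \<Rightarrow> real" where
  "interval_dist d a b x y = Inf ((\<lambda>t. d t x y) ` {a..b})"

definition rips :: "'v set \<Rightarrow> ('v \<Rightarrow> 'v \<Rightarrow> real) \<Rightarrow> real \<Rightarrow> 'v set set" where
  "rips X D \<delta> = {\<sigma>. \<sigma> \<subseteq> X \<and> finite \<sigma> \<and> \<sigma> \<noteq> {} \<and> (\<forall>x\<in>\<sigma>. \<forall>y\<in>\<sigma>. D x y \<le> \<delta>)}"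

definition rips_lev :: "'v set \<Rightarrow> (real \<Rightarrow> 'v \<Rightarrow> 'v \<Rightarrow> real) \<Rightarrow> dyn \<Rightarrow> 'v set set" where
  "rips_lev X d p = rips X (interval_dist d (fst (fst p)) (snd (fst p))) (snd p)"

text \<open>Simplices are oriented by the linear order on vertices. An n-chain with
  coefficients in the field 'a is a function on simplices supported on the
  n-simplices (cardinality n+1) of K.\<close>

definition chains :: "'a::field itself \<Rightarrow> 'v set set \<Rightarrow> nat \<Rightarrow> ('v set \<Rightarrow> 'a) set" where
  "chains F K n = {c. \<forall>\<sigma>. c \<sigma> \<noteq> 0 \<longrightarrow> \<sigma> \<in> K \<and> card \<sigma> = Suc n}"

text \<open>Boundary of an n-chain: the face of sorted simplex [v_0,...,v_n] omitting v_i
  gets sign (-1)^i.\<close>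
definition bd :: "'v::linorder set set \<Rightarrow> nat \<Rightarrow> ('v set \<Rightarrow> 'a::field) \<Rightarrow> 'v set \<Rightarrow> 'a" where
  "bd K n c \<tau> = (if \<tau> \<in> K \<and> card \<tau> = n then
      (\<Sum>\<sigma>\<in>{\<sigma>\<in>K. card \<sigma> = Suc n \<and> \<tau> \<subseteq> \<sigma>}.
          (-1) ^ card {w\<in>\<sigma>. w < the_elem (\<sigma> - \<tau>)} * c \<sigma>)
    else 0)"

definition cycles :: "'a::field itself \<Rightarrow> 'v::linorder set set \<Rightarrow> nat \<Rightarrow> ('v set \<Rightarrow> 'a) set" where
  "cycles F K n = {c \<in> chains F K n. bd K n c = (\<lambda>_. 0)}"

definition boundaries :: "'a::field itself \<Rightarrow> 'v::linorder set set \<Rightarrow> nat \<Rightarrow> ('v set \<Rightarrow> 'a) set" where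
  "boundaries F K n = bd K (Suc n) ` chains F K (Suc n)"

text \<open>H_n(K; F) = cycles / boundaries is isomorphic to F: it is spanned by a single
  nonzero class.\<close>
definition homology_iso_field :: "'a::field itself \<Rightarrow> 'v::linorder set set \<Rightarrow> nat \<Rightarrow> bool" where
  "homology_iso_field F K n \<longleftrightarrow>
     (\<exists>z\<in>cycles F K n. z \<notin> boundaries F K n \<and>
        (\<forall>w\<in>cycles F K n. \<exists>r::'a. (\<lambda>\<sigma>. w \<sigma> - r * z \<sigma>) \<in> boundaries F K n))"

text \<open>For K a subcomplex of L, the map H_n(K) \<rightarrow> H_n(L), [z] \<mapsto> [z], induced by the
  inclusion is an isomorphism (injective and surjective).\<close>
definition induced_iso :: "'a::field itself \<Rightarrow> 'v::linorder set set \<Rightarrow> 'v set set \<Rightarrow> nat \<Rightarrow> bool" where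
  "induced_iso F K L n \<longleftrightarrow>
     (\<forall>z\<in>cycles F K n. z \<in> boundaries F L n \<longrightarrow> z \<in> boundaries F K n) \<and>
     (\<forall>w\<in>cycles F L n. \<exists>z\<in>cycles F K n. (\<lambda>\<sigma>. w \<sigma> - z \<sigma>) \<in> boundaries F L n)"

definition in_supp :: "'a::field itself \<Rightarrow> 'v::linorder set \<Rightarrow> (real \<Rightarrow> 'v \<Rightarrow> 'v \<Rightarrow> real) \<Rightarrow> nat \<Rightarrow> dyn \<Rightarrow> bool" where
  "in_supp F X d k p \<longleftrightarrow> dyn_point p \<and> homology_iso_field F (rips_lev X d p) k"

end

theory Submission
  imports Defs
begin


definition sg :: "'v::linorder set \<Rightarrow> 'v \<Rightarrow> 'a::field" where
  "sg \<tau> x = (-1) ^ card {w\<in>\<tau>. w < x}"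

definition bdV :: "'v::linorder set \<Rightarrow> nat \<Rightarrow> ('v set \<Rightarrow> 'a::field) \<Rightarrow> 'v set \<Rightarrow> 'a" where
  "bdV V n c \<tau> = (if \<tau> \<subseteq> V \<and> card \<tau> = n then (\<Sum>x\<in>V-\<tau>. sg \<tau> x * c (insert x \<tau>)) else 0)"

definition cone :: "'v::linorder \<Rightarrow> ('v set \<Rightarrow> 'a::field) \<Rightarrow> 'v set \<Rightarrow> 'a" where
  "cone v c \<sigma> = (if v \<in> \<sigma> then sg (\<sigma> - {v}) v * c (\<sigma> - {v}) else 0)"

definition ch :: "'v set \<Rightarrow> ('v \<Rightarrow> 'v \<Rightarrow> bool) \<Rightarrow> nat \<Rightarrow> ('v set \<Rightarrow> 'a::field) set" where
  "ch V E n = {c. \<forall>\<sigma>. c \<sigma> \<noteq> 0 \<longrightarrow> \<sigma> \<subseteq> V \<and> card \<sigma> = Suc n \<and> (\<forall>x\<in>\<sigma>. \<forall>y\<in>\<sigma>. E x y)}"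

lemma sg_sq: "sg \<tau> x * sg \<tau> x = (1::'a::field)"
  unfolding sg_def by (simp add: power_mult_distrib[symmetric])

lemma sg_nz: "sg \<tau> x \<noteq> (0::'a::field)"
  unfolding sg_def by simp

lemma sg_insert:
  assumes "finite \<tau>" "v \<notin> \<tau>" "x \<noteq> v"
  shows "(sg (insert v \<tau>) x :: 'a::field) = (if v < x then - sg \<tau> x else sg \<tau> x)"
proof (cases "v < x")
  case True
  then have "{w\<in>insert v \<tau>. w < x} = insert v {w\<in>\<tau>. w < x}" by auto
  moreover have "card (insert v {w\<in>\<tau>. w < x}) = Suc (card {w\<in>\<tau>. w < x})"
    using assms by simp
  ultimately show ?thesis using True unfolding sg_def by simp
next
  case False
  then have "{w\<in>insert v \<tau>. w < x} = {w\<in>\<tau>. w < x}" by auto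
  then show ?thesis using False unfolding sg_def by simp
qed

lemma sg_insert_self: "sg (insert x \<tau>) x = sg \<tau> x"
proof -
  have "{w\<in>insert x \<tau>. w < x} = {w\<in>\<tau>. w < x}" by auto
  then show ?thesis unfolding sg_def by simp
qed

lemma sg_remove_self: "sg (\<tau> - {x}) x = sg \<tau> x"
proof -
  have "{w\<in>\<tau> - {x}. w < x} = {w\<in>\<tau>. w < x}" by auto
  then show ?thesis unfolding sg_def by simp
qed

lemma ch_supp: "c \<in> ch V E n \<Longrightarrow> c \<sigma> \<noteq> 0 \<Longrightarrow> \<sigma> \<subseteq> V \<and> card \<sigma> = Suc n \<and> (\<forall>x\<in>\<sigma>. \<forall>y\<in>\<sigma>. E x y)"
  unfolding ch_def by blast

lemma ch_zero: "(\<lambda>_. 0) \<in> ch V E n"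
  unfolding ch_def by simp

lemma bdV_zero: "bdV V n (\<lambda>_. 0) = (\<lambda>_. 0)"
  unfolding bdV_def by (rule ext) simp

lemma bdV_add: "bdV V n (\<lambda>\<sigma>. c1 \<sigma> + c2 \<sigma>) \<tau> = bdV V n c1 \<tau> + bdV V n c2 \<tau>"
  unfolding bdV_def by (simp add: distrib_left sum.distrib)

lemma bdV_diff: "bdV V n (\<lambda>\<sigma>. c1 \<sigma> - c2 \<sigma>) \<tau> = bdV V n c1 \<tau> - bdV V n c2 \<tau>"
  unfolding bdV_def by (simp add: right_diff_distrib sum_subtractf)

lemma bdV_nov:
  assumes "\<And>\<sigma>. c \<sigma> \<noteq> 0 \<Longrightarrow> v \<notin> \<sigma>" "v \<in> \<tau>"
  shows "bdV V n c \<tau> = 0"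
proof -
  have "\<And>x. c (insert x \<tau>) = 0" using assms by blast
  then show ?thesis unfolding bdV_def by simp
qed

lemma bdV_restrict:
  assumes "finite V" "W \<subseteq> V" "\<And>\<sigma>. c \<sigma> \<noteq> 0 \<Longrightarrow> \<sigma> \<subseteq> W"
  shows "bdV V n c = bdV W n c"
proof
  fix \<tau>
  show "bdV V n c \<tau> = bdV W n c \<tau>"
  proof (cases "\<tau> \<subseteq> W")
    case True
    have "(\<Sum>x\<in>V-\<tau>. sg \<tau> x * c (insert x \<tau>)) = (\<Sum>x\<in>W-\<tau>. sg \<tau> x * c (insert x \<tau>))"
    proof (rule sum.mono_neutral_right)
      show "finite (V - \<tau>)" using assms by simp
      show "W - \<tau> \<subseteq> V - \<tau>" using assms by auto
      show "\<forall>i\<in>V - \<tau> - (W - \<tau>). sg \<tau> i * c (insert i \<tau>) = 0"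
        using assms(3) by auto
    qed
    then show ?thesis using True assms(2) unfolding bdV_def by auto
  next
    case False
    have "\<And>x. c (insert x \<tau>) = 0" using assms(3) False by blast
    then show ?thesis using False unfolding bdV_def by simp
  qed
qed

lemma cone_id:
  fixes c :: "'v::linorder set \<Rightarrow> 'a::field"
  assumes fin: "finite V" and vV: "v \<in> V"
    and supp: "\<And>\<sigma>. c \<sigma> \<noteq> 0 \<Longrightarrow> \<sigma> \<subseteq> V \<and> card \<sigma> = Suc n \<and> v \<notin> \<sigma>"
  shows "bdV V (Suc n) (cone v c) \<tau> = c \<tau> - cone v (bdV V n c) \<tau>"
proof (cases "\<tau> \<subseteq> V \<and> card \<tau> = Suc n")
  case False
  have c0: "c \<tau> = 0" using supp False by blast
  have "cone v (bdV V n c) \<tau> = 0"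
  proof (cases "v \<in> \<tau>")
    case True
    have "\<not> (\<tau> - {v} \<subseteq> V \<and> card (\<tau> - {v}) = n)"
    proof
      assume h: "\<tau> - {v} \<subseteq> V \<and> card (\<tau> - {v}) = n"
      then have "\<tau> \<subseteq> V" using vV by auto
      then have "finite \<tau>" using fin finite_subset by blast
      have "card \<tau> > 0" using True \<open>finite \<tau>\<close> by (auto simp: card_gt_0_iff)
      then have "card \<tau> = Suc n" using h True \<open>finite \<tau>\<close> by (cases "card \<tau>") auto
      then show False using False \<open>\<tau> \<subseteq> V\<close> by simp
    qed
    then have "bdV V n c (\<tau> - {v}) = 0" unfolding bdV_def by (rule if_not_P)
    then show ?thesis unfolding cone_def by simp
  qed (simp add: cone_def)
  moreover have "bdV V (Suc n) (cone v c) \<tau> = 0" unfolding bdV_def using False by (rule if_not_P)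
  ultimately show ?thesis using c0 by simp
next
  case True
  then have tV: "\<tau> \<subseteq> V" and ct: "card \<tau> = Suc n" by auto
  have ft: "finite \<tau>" using tV fin finite_subset by blast
  show ?thesis
  proof (cases "v \<in> \<tau>")
    case False
    have "\<And>x. x \<in> V - \<tau> \<Longrightarrow> sg \<tau> x * cone v c (insert x \<tau>) = (if x = v then c \<tau> else 0)"
    proof -
      fix x assume "x \<in> V - \<tau>"
      show "sg \<tau> x * cone v c (insert x \<tau>) = (if x = v then c \<tau> else 0)"
      proof (cases "x = v")
        case True
        have "insert v \<tau> - {v} = \<tau>" using False by auto
        then show ?thesis using True by (simp add: cone_def mult.assoc[symmetric] sg_sq)
      next
        case xv: False
        then have "v \<notin> insert x \<tau>" using False by auto
        then show ?thesis using xv by (simp add: cone_def)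
      qed
    qed
    then have "bdV V (Suc n) (cone v c) \<tau> = (\<Sum>x\<in>V-\<tau>. (if x = v then c \<tau> else 0))"
      using True unfolding bdV_def by (auto intro: sum.cong)
    also have "\<dots> = c \<tau>" using False vV fin by simp
    finally show ?thesis using False by (simp add: cone_def)
  next
    case vt: True
    define \<rho> where "\<rho> = \<tau> - {v}"
    have fr: "finite \<rho>" and vr: "v \<notin> \<rho>" and tr: "\<tau> = insert v \<rho>" using ft vt unfolding \<rho>_def by auto
    have cr: "card \<rho> = n" using ct ft vt unfolding \<rho>_def by simp
    have rV: "\<rho> \<subseteq> V" using tV unfolding \<rho>_def by auto
    have c0: "c \<tau> = 0" using supp vt by blast
    have VD: "V - \<rho> = insert v (V - \<tau>)" using tr vV vr by auto
    have "bdV V n c \<rho> = (\<Sum>x\<in>V-\<rho>. sg \<rho> x * c (insert x \<rho>))"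
      using rV cr unfolding bdV_def by simp
    also have "\<dots> = (\<Sum>x\<in>V-\<tau>. sg \<rho> x * c (insert x \<rho>))"
    proof -
      have "v \<notin> V - \<tau>" using vt by simp
      moreover have "insert v \<rho> = \<tau>" using tr by simp
      ultimately show ?thesis unfolding VD using fin c0 by (simp add: sum.insert)
    qed
    finally have bdr: "bdV V n c \<rho> = (\<Sum>x\<in>V-\<tau>. sg \<rho> x * c (insert x \<rho>))" .
    have "bdV V (Suc n) (cone v c) \<tau> = (\<Sum>x\<in>V-\<tau>. sg \<tau> x * cone v c (insert x \<tau>))"
      using True unfolding bdV_def by simp
    also have "\<dots> = (\<Sum>x\<in>V-\<tau>. - (sg \<rho> v * (sg \<rho> x * c (insert x \<rho>))))"
    proof (rule sum.cong)
      fix x assume xs: "x \<in> V - \<tau>"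
      then have xv: "x \<noteq> v" and xr: "x \<notin> \<rho>" using vt tr by auto
      have e1: "insert x \<tau> - {v} = insert x \<rho>" using tr xv vr by auto
      have s1: "(sg \<tau> x :: 'a) = (if v < x then - sg \<rho> x else sg \<rho> x)"
        using sg_insert[OF fr vr xv] tr by simp
      have s2: "(sg (insert x \<rho>) v :: 'a) = (if x < v then - sg \<rho> v else sg \<rho> v)"
        using sg_insert[OF fr xr, of v] xv by simp
      have cc: "cone v c (insert x \<tau>) = sg (insert x \<rho>) v * c (insert x \<rho>)"
        using e1 vt unfolding cone_def by simp
      show "sg \<tau> x * cone v c (insert x \<tau>) = - (sg \<rho> v * (sg \<rho> x * c (insert x \<rho>)))"
      proof (cases "v < x")
        case True
        then have "\<not> x < v" by simp
        then show ?thesis using True s1 s2 cc by simp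
      next
        case False
        then have "x < v" using xv by simp
        then show ?thesis using False s1 s2 cc by simp
      qed
    qed simp
    also have "\<dots> = - (sg \<rho> v * bdV V n c \<rho>)"
      using bdr by (simp add: sum_negf sum_distrib_left)
    finally show ?thesis using c0 vt unfolding cone_def \<rho>_def by simp
  qed
qed



lemma ch_cone:
  fixes c :: "'v::linorder set \<Rightarrow> 'a::field"
  assumes c: "c \<in> ch N E n" and NV: "N \<subseteq> V" and vV: "v \<in> V" and vN: "v \<notin> N"
    and adj: "\<forall>x\<in>N. E v x" and sym: "\<And>x y. E x y = E y x" and refl: "\<And>x. E x x"
  shows "cone v c \<in> ch V E (Suc n)"
  unfolding ch_def
proof (intro CollectI allI impI)
  fix \<sigma> assume h: "cone v c \<sigma> \<noteq> 0"
  then have vs: "v \<in> \<sigma>" and cz: "c (\<sigma> - {v}) \<noteq> 0" unfolding cone_def by (auto split: if_splits)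
  from ch_supp[OF c cz] have s1: "\<sigma> - {v} \<subseteq> N" and s2: "card (\<sigma> - {v}) = Suc n"
    and s3: "\<forall>x\<in>\<sigma> - {v}. \<forall>y\<in>\<sigma> - {v}. E x y" by auto
  have "finite (\<sigma> - {v})" by (rule card_ge_0_finite) (simp add: s2)
  then have fs: "finite \<sigma>" by simp
  have "card \<sigma> = Suc (Suc n)" using s2 card.remove[OF fs vs] by simp
  moreover have "\<sigma> \<subseteq> V" using s1 NV vV vs by auto
  moreover have "\<forall>x\<in>\<sigma>. \<forall>y\<in>\<sigma>. E x y"
  proof (intro ballI)
    fix x y assume "x \<in> \<sigma>" "y \<in> \<sigma>"
    then show "E x y" using s1 s3 adj sym refl by (cases "x = v"; cases "y = v") auto
  qed
  ultimately show "\<sigma> \<subseteq> V \<and> card \<sigma> = Suc (Suc n) \<and> (\<forall>x\<in>\<sigma>. \<forall>y\<in>\<sigma>. E x y)" by simp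
qed

lemma ch_mono: "c \<in> ch W E n \<Longrightarrow> W \<subseteq> V \<Longrightarrow> c \<in> ch V E n"
  unfolding ch_def by blast

lemma ch_add: assumes "c1 \<in> ch V E n" "c2 \<in> ch V E n" shows "(\<lambda>\<sigma>. c1 \<sigma> + c2 \<sigma>) \<in> ch V E n"
proof -
  { fix \<sigma> assume "c1 \<sigma> + c2 \<sigma> \<noteq> 0"
    then have "c1 \<sigma> \<noteq> 0 \<or> c2 \<sigma> \<noteq> 0" by auto
    then have "\<sigma> \<subseteq> V \<and> card \<sigma> = Suc n \<and> (\<forall>x\<in>\<sigma>. \<forall>y\<in>\<sigma>. E x y)"
      using ch_supp[OF assms(1)] ch_supp[OF assms(2)] by blast }
  then show ?thesis unfolding ch_def by blast
qed

lemma ch_diff: assumes "c1 \<in> ch V E n" "c2 \<in> ch V E n" shows "(\<lambda>\<sigma>. c1 \<sigma> - c2 \<sigma>) \<in> ch V E n"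
proof -
  { fix \<sigma> assume "c1 \<sigma> - c2 \<sigma> \<noteq> 0"
    then have "c1 \<sigma> \<noteq> 0 \<or> c2 \<sigma> \<noteq> 0" by auto
    then have "\<sigma> \<subseteq> V \<and> card \<sigma> = Suc n \<and> (\<forall>x\<in>\<sigma>. \<forall>y\<in>\<sigma>. E x y)"
      using ch_supp[OF assms(1)] ch_supp[OF assms(2)] by blast }
  then show ?thesis unfolding ch_def by blast
qed

lemma step:
  fixes z :: "'v::linorder set \<Rightarrow> 'a::field"
  assumes fin: "finite V" and vV: "v \<in> V"
    and sym: "\<And>x y. E x y = E y x" and refl: "\<And>x. E x x"
    and zc: "z \<in> ch V E (Suc m)" and zb: "bdV V (Suc m) z = (\<lambda>_. 0)"
    and H: "{x\<in>V. x \<noteq> v \<and> E v x} = V - {v} \<or>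
      ((\<forall>a\<in>(ch {x\<in>V. x \<noteq> v \<and> E v x} E m :: ('v set \<Rightarrow> 'a) set). bdV {x\<in>V. x \<noteq> v \<and> E v x} m a = (\<lambda>_. 0) \<longrightarrow>
          (\<exists>a'\<in>ch {x\<in>V. x \<noteq> v \<and> E v x} E (Suc m). bdV {x\<in>V. x \<noteq> v \<and> E v x} (Suc m) a' = a)) \<and>
       (\<forall>y\<in>(ch (V - {v}) E (Suc m) :: ('v set \<Rightarrow> 'a) set). bdV (V - {v}) (Suc m) y = (\<lambda>_. 0) \<longrightarrow>
          (\<exists>e\<in>ch (V - {v}) E (Suc (Suc m)). bdV (V - {v}) (Suc (Suc m)) e = y)))"
  shows "\<exists>e\<in>ch V E (Suc (Suc m)). bdV V (Suc (Suc m)) e = z"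
proof -
  define N where "N = {x\<in>V. x \<noteq> v \<and> E v x}"
  have NV: "N \<subseteq> V" and vN: "v \<notin> N" and adj: "\<forall>x\<in>N. E v x" unfolding N_def by auto
  define a where "a \<sigma> = (if v \<notin> \<sigma> then sg \<sigma> v * z (insert v \<sigma>) else 0)" for \<sigma>
  define b where "b \<sigma> = (if v \<in> \<sigma> then 0 else z \<sigma>)" for \<sigma>
  have zdec: "z \<sigma> = cone v a \<sigma> + b \<sigma>" for \<sigma>
  proof (cases "v \<in> \<sigma>")
    case True
    then have "insert v (\<sigma> - {v}) = \<sigma>" by auto
    then show ?thesis using True unfolding cone_def a_def b_def
      by (simp add: mult.assoc[symmetric] sg_sq)
  qed (simp add: cone_def b_def)
  have ach: "a \<in> ch N E m" unfolding ch_def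
  proof (intro CollectI allI impI)
    fix \<sigma> assume h: "a \<sigma> \<noteq> 0"
    then have vs: "v \<notin> \<sigma>" and zz: "z (insert v \<sigma>) \<noteq> 0" unfolding a_def by (auto split: if_splits)
    from ch_supp[OF zc zz] have s1: "insert v \<sigma> \<subseteq> V" and s2: "card (insert v \<sigma>) = Suc (Suc m)"
      and s3: "\<forall>x\<in>insert v \<sigma>. \<forall>y\<in>insert v \<sigma>. E x y" by auto
    have "finite (insert v \<sigma>)" by (rule card_ge_0_finite) (simp add: s2)
    then have fs: "finite \<sigma>" by simp
    show "\<sigma> \<subseteq> N \<and> card \<sigma> = Suc m \<and> (\<forall>x\<in>\<sigma>. \<forall>y\<in>\<sigma>. E x y)"
      using s1 s2 s3 vs fs unfolding N_def by auto
  qed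
  have anov: "a \<sigma> \<noteq> 0 \<Longrightarrow> \<sigma> \<subseteq> V \<and> card \<sigma> = Suc m \<and> v \<notin> \<sigma>" for \<sigma>
    using ch_supp[OF ach] NV vN by blast
  have bch: "b \<in> ch (V - {v}) E (Suc m)"
    using zc unfolding ch_def b_def by auto
  have bnov: "b \<sigma> \<noteq> 0 \<Longrightarrow> \<sigma> \<subseteq> V \<and> card \<sigma> = Suc (Suc m) \<and> v \<notin> \<sigma>" for \<sigma>
    using ch_supp[OF bch] by blast
  have eq0: "a \<tau> - cone v (bdV V m a) \<tau> + bdV V (Suc m) b \<tau> = 0" for \<tau>
  proof -
    have "z = (\<lambda>\<sigma>. cone v a \<sigma> + b \<sigma>)" using zdec by auto
    then have "0 = bdV V (Suc m) (cone v a) \<tau> + bdV V (Suc m) b \<tau>"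
      using zb bdV_add[of V "Suc m" "cone v a" b \<tau>] by (metis (no_types))
    moreover have "bdV V (Suc m) (cone v a) \<tau> = a \<tau> - cone v (bdV V m a) \<tau>"
      by (rule cone_id[OF fin vV]) (erule anov)
    ultimately show ?thesis by simp
  qed
  have bdb_v: "v \<in> \<tau> \<Longrightarrow> bdV V (Suc m) b \<tau> = 0" for \<tau>
    by (rule bdV_nov) (use bnov in auto)
  have a_v: "v \<in> \<tau> \<Longrightarrow> a \<tau> = 0" for \<tau> using anov by blast
  have bda: "bdV V m a = (\<lambda>_. 0)"
  proof
    fix \<sigma>
    show "bdV V m a \<sigma> = 0"
    proof (cases "v \<in> \<sigma>")
      case True
      then show ?thesis by (rule bdV_nov[rotated]) (use anov in auto)
    next
      case False
      have "cone v (bdV V m a) (insert v \<sigma>) = 0"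
        using eq0[of "insert v \<sigma>"] bdb_v[of "insert v \<sigma>"] a_v[of "insert v \<sigma>"] by simp
      moreover have "insert v \<sigma> - {v} = \<sigma>" using False by auto
      ultimately have "sg \<sigma> v * bdV V m a \<sigma> = 0" unfolding cone_def by simp
      then show ?thesis by (simp add: sg_nz)
    qed
  qed
  have cone0: "cone v (\<lambda>_. 0) \<tau> = 0" for \<tau> unfolding cone_def by simp
  have bdb: "bdV V (Suc m) b \<tau> = - a \<tau>" for \<tau>
    using eq0[of \<tau>] unfolding bda cone0 by (simp add: eq_neg_iff_add_eq_0 add.commute)
  show ?thesis
  proof (cases "N = V - {v}")
    case True
    have bchN: "b \<in> ch N E (Suc m)" using bch True by simp
    have ech: "cone v b \<in> ch V E (Suc (Suc m))"
      by (rule ch_cone[OF bchN NV vV vN adj sym refl])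
    have "bdV V (Suc (Suc m)) (cone v b) \<tau> = z \<tau>" for \<tau>
    proof -
      have "bdV V (Suc (Suc m)) (cone v b) \<tau> = b \<tau> - cone v (bdV V (Suc m) b) \<tau>"
        by (rule cone_id[OF fin vV]) (erule bnov)
      also have "cone v (bdV V (Suc m) b) \<tau> = - cone v a \<tau>"
        unfolding cone_def bdb by simp
      finally show ?thesis using zdec[of \<tau>] by simp
    qed
    then show ?thesis using ech by blast
  next
    case False
    have HH: "(\<forall>a\<in>(ch N E m :: ('v set \<Rightarrow> 'a) set). bdV N m a = (\<lambda>_. 0) \<longrightarrow> (\<exists>a'\<in>ch N E (Suc m). bdV N (Suc m) a' = a)) \<and>
      (\<forall>y\<in>(ch (V - {v}) E (Suc m) :: ('v set \<Rightarrow> 'a) set). bdV (V - {v}) (Suc m) y = (\<lambda>_. 0) \<longrightarrow>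
          (\<exists>e\<in>ch (V - {v}) E (Suc (Suc m)). bdV (V - {v}) (Suc (Suc m)) e = y))"
      using H False unfolding N_def by blast
    note H1 = HH[THEN conjunct1] and H2 = HH[THEN conjunct2]
    have aN: "a \<sigma> \<noteq> 0 \<Longrightarrow> \<sigma> \<subseteq> N" for \<sigma> using ch_supp[OF ach] by blast
    have "bdV V m a = bdV N m a" by (rule bdV_restrict[OF fin NV]) (erule aN)
    then have "bdV N m a = (\<lambda>_. 0)" using bda by simp
    then obtain a' where a'ch: "a' \<in> ch N E (Suc m)" and a'b: "bdV N (Suc m) a' = a"
      using H1 ach by blast
    have a'N: "a' \<sigma> \<noteq> 0 \<Longrightarrow> \<sigma> \<subseteq> N" for \<sigma> using ch_supp[OF a'ch] by blast
    have "bdV V (Suc m) a' = bdV N (Suc m) a'" by (rule bdV_restrict[OF fin NV]) (erule a'N)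
    then have a'b2: "bdV V (Suc m) a' = a" using a'b by simp
    have a'nov: "a' \<sigma> \<noteq> 0 \<Longrightarrow> \<sigma> \<subseteq> V \<and> card \<sigma> = Suc (Suc m) \<and> v \<notin> \<sigma>" for \<sigma>
      using ch_supp[OF a'ch] NV vN by blast
    define y where "y \<sigma> = b \<sigma> + a' \<sigma>" for \<sigma>
    have ych: "y \<in> ch (V - {v}) E (Suc m)"
      unfolding y_def by (rule ch_add[OF bch ch_mono[OF a'ch]]) (use NV vN in auto)
    have yV: "y \<sigma> \<noteq> 0 \<Longrightarrow> \<sigma> \<subseteq> V - {v}" for \<sigma> using ch_supp[OF ych] by blast
    have "bdV V (Suc m) y = (\<lambda>_. 0)"
    proof
      fix \<tau>
      have "bdV V (Suc m) y \<tau> = bdV V (Suc m) b \<tau> + bdV V (Suc m) a' \<tau>"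
        unfolding y_def by (rule bdV_add)
      then show "bdV V (Suc m) y \<tau> = 0" using bdb[of \<tau>] a'b2 by simp
    qed
    have "bdV (V - {v}) (Suc m) y = (\<lambda>_. 0)"
    proof -
      have "bdV V (Suc m) y = bdV (V - {v}) (Suc m) y" by (rule bdV_restrict[OF fin]) (auto dest: yV)
      then show ?thesis using \<open>bdV V (Suc m) y = (\<lambda>_. 0)\<close> by simp
    qed
    then obtain e0 where e0ch: "e0 \<in> ch (V - {v}) E (Suc (Suc m))"
      and e0b: "bdV (V - {v}) (Suc (Suc m)) e0 = y"
      using H2 ych by blast
    have e0V: "e0 \<sigma> \<noteq> 0 \<Longrightarrow> \<sigma> \<subseteq> V - {v}" for \<sigma> using ch_supp[OF e0ch] by blast
    have "bdV V (Suc (Suc m)) e0 = bdV (V - {v}) (Suc (Suc m)) e0" by (rule bdV_restrict[OF fin]) (auto dest: e0V)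
    then have e0b2: "bdV V (Suc (Suc m)) e0 = y" using e0b by simp
    define e where "e \<sigma> = e0 \<sigma> - cone v a' \<sigma>" for \<sigma>
    have ech: "e \<in> ch V E (Suc (Suc m))"
      unfolding e_def
      by (rule ch_diff[OF ch_mono[OF e0ch] ch_cone[OF a'ch NV vV vN adj sym refl]]) auto
    have "bdV V (Suc (Suc m)) e \<tau> = z \<tau>" for \<tau>
    proof -
      have "bdV V (Suc (Suc m)) e \<tau> = bdV V (Suc (Suc m)) e0 \<tau> - bdV V (Suc (Suc m)) (cone v a') \<tau>"
        unfolding e_def by (rule bdV_diff)
      also have "bdV V (Suc (Suc m)) (cone v a') \<tau> = a' \<tau> - cone v (bdV V (Suc m) a') \<tau>"
        by (rule cone_id[OF fin vV]) (erule a'nov)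
      finally show ?thesis using e0b2 a'b2 zdec[of \<tau>] unfolding y_def by simp
    qed
    then show ?thesis using ech by blast
  qed
qed



lemma ch_empty:
  assumes "z \<in> ch {} E n" shows "z = (\<lambda>_. 0)"
proof
  fix \<sigma> show "z \<sigma> = 0"
  proof (rule ccontr)
    assume "z \<sigma> \<noteq> 0"
    from ch_supp[OF assms this] have "\<sigma> = {}" "card \<sigma> = Suc n" by auto
    then show False by simp
  qed
qed

lemma vanish:
  fixes E :: "'v::linorder \<Rightarrow> 'v \<Rightarrow> bool"
  assumes sym: "\<And>x y. E x y = E y x" and refl: "\<And>x. E x x"
  shows "\<forall>V (z::'v set \<Rightarrow> 'a::field). finite V \<longrightarrow> card V \<le> 2*k+1 \<longrightarrow> z \<in> ch V E k \<longrightarrow>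
     bdV V k z = (\<lambda>_. 0) \<longrightarrow> (\<exists>e\<in>ch V E (Suc k). bdV V (Suc k) e = z)"
proof (induction k)
  case 0
  show ?case
  proof (intro allI impI)
    fix V and z :: "'v set \<Rightarrow> 'a"
    assume fV: "finite V" and cV: "card V \<le> 2*0+1" and zc: "z \<in> ch V E 0"
      and zb: "bdV V 0 z = (\<lambda>_. 0)"
    have "z = (\<lambda>_. 0)"
    proof
      fix \<sigma> show "z \<sigma> = 0"
      proof (rule ccontr)
        assume h: "z \<sigma> \<noteq> 0"
        then have sV: "\<sigma> \<subseteq> V" and cs: "card \<sigma> = 1" using ch_supp[OF zc h] by auto
        from cs obtain u where su: "\<sigma> = {u}" by (rule card_1_singletonE)
        then have uV: "u \<in> V" using sV by auto
        have "V = {u}" using cV fV uV card_le_Suc0_iff_eq[OF fV] by auto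
        then have "bdV V 0 z {} = z {u}" unfolding bdV_def by (simp add: sg_def)
        then show False using zb h su by simp
      qed
    qed
    then show "\<exists>e\<in>ch V E (Suc 0). bdV V (Suc 0) e = z"
      by (intro bexI[of _ "\<lambda>_. 0"]) (simp_all add: bdV_zero ch_zero)
  qed
next
  case (Suc m)
  have main: "\<forall>V (z::'v set \<Rightarrow> 'a). card V = n \<longrightarrow> finite V \<longrightarrow> card V \<le> 2*Suc m+1 \<longrightarrow>
     z \<in> ch V E (Suc m) \<longrightarrow> bdV V (Suc m) z = (\<lambda>_. 0) \<longrightarrow>
     (\<exists>e\<in>ch V E (Suc (Suc m)). bdV V (Suc (Suc m)) e = z)" for n
  proof (induction n rule: less_induct)
    case (less n)
    show ?case
    proof (intro allI impI)
      fix V and z :: "'v set \<Rightarrow> 'a"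
      assume cn: "card V = n" and fV: "finite V" and cV: "card V \<le> 2*Suc m+1"
        and zc: "z \<in> ch V E (Suc m)" and zb: "bdV V (Suc m) z = (\<lambda>_. 0)"
      show "\<exists>e\<in>ch V E (Suc (Suc m)). bdV V (Suc (Suc m)) e = z"
      proof (cases "V = {}")
        case True
        then have "z = (\<lambda>_. 0)" using ch_empty zc by blast
        then show ?thesis by (intro bexI[of _ "\<lambda>_. 0"]) (simp_all add: bdV_zero ch_zero)
      next
        case False
        then obtain v where vV: "v \<in> V" by blast
        define N where "N = {x\<in>V. x \<noteq> v \<and> E v x}"
        have H: "N = V - {v} \<or>
          ((\<forall>a\<in>(ch N E m :: ('v set \<Rightarrow> 'a) set). bdV N m a = (\<lambda>_. 0) \<longrightarrow>
              (\<exists>a'\<in>ch N E (Suc m). bdV N (Suc m) a' = a)) \<and>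
           (\<forall>y\<in>(ch (V - {v}) E (Suc m) :: ('v set \<Rightarrow> 'a) set). bdV (V - {v}) (Suc m) y = (\<lambda>_. 0) \<longrightarrow>
              (\<exists>e\<in>ch (V - {v}) E (Suc (Suc m)). bdV (V - {v}) (Suc (Suc m)) e = y)))"
        proof (cases "N = V - {v}")
          case False
          have "N \<subset> V - {v}" using False unfolding N_def by auto
          then have "card N < card (V - {v})" using fV by (simp add: psubset_card_mono)
          moreover have "card (V - {v}) = card V - 1" using vV fV by simp
          ultimately have cN: "card N \<le> 2*m+1" using cV by simp
          have fN: "finite N" using fV unfolding N_def by simp
          have "card V > 0" using vV fV card_gt_0_iff by blast
          then have c1: "card (V - {v}) < n" using cn vV fV by simp
          have c2: "card (V - {v}) \<le> 2 * Suc m + 1" using cV vV fV by simp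
          have fV': "finite (V - {v})" using fV by simp
          show ?thesis
          proof (rule disjI2, intro conjI ballI impI)
            fix a :: "'v set \<Rightarrow> 'a" assume "a \<in> ch N E m" "bdV N m a = (\<lambda>_. 0)"
            then show "\<exists>a'\<in>ch N E (Suc m). bdV N (Suc m) a' = a"
              using Suc.IH[rule_format, OF fN cN] by blast
          next
            fix y :: "'v set \<Rightarrow> 'a" assume "y \<in> ch (V - {v}) E (Suc m)" "bdV (V - {v}) (Suc m) y = (\<lambda>_. 0)"
            then show "\<exists>e\<in>ch (V - {v}) E (Suc (Suc m)). bdV (V - {v}) (Suc (Suc m)) e = y"
              using less.IH[OF c1, rule_format, OF HOL.refl fV' c2] by blast
          qed
        qed simp
        show ?thesis
          by (rule step[OF fV vV sym refl zc zb]) (use H in \<open>simp only: N_def\<close>)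
      qed
    qed
  qed
  then show ?case by blast
qed

lemma all_bd_cone:
  fixes E :: "'v::linorder \<Rightarrow> 'v \<Rightarrow> bool" and z :: "'v set \<Rightarrow> 'a::field"
  assumes fV: "finite V" and vV: "v \<in> V" and sym: "\<And>x y. E x y = E y x" and refl: "\<And>x. E x x"
    and adj: "\<forall>x\<in>V - {v}. E v x"
    and zc: "z \<in> ch V E (Suc m)" and zb: "bdV V (Suc m) z = (\<lambda>_. 0)"
  shows "\<exists>e\<in>ch V E (Suc (Suc m)). bdV V (Suc (Suc m)) e = z"
  by (rule step[OF fV vV sym refl zc zb]) (rule disjI1, insert adj, auto)

lemma all_bd_two:
  fixes E :: "'v::linorder \<Rightarrow> 'v \<Rightarrow> bool" and z :: "'v set \<Rightarrow> 'a::field"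
  assumes fV: "finite V" and cV: "card V = 2 * Suc m + 2" and vV: "v \<in> V"
    and sym: "\<And>x y. E x y = E y x" and refl: "\<And>x. E x x"
    and uV: "u \<in> V" and wV: "w \<in> V" and uw: "u \<noteq> w" and nu: "\<not> E v u" and nw: "\<not> E v w"
    and zc: "z \<in> ch V E (Suc m)" and zb: "bdV V (Suc m) z = (\<lambda>_. 0)"
  shows "\<exists>e\<in>ch V E (Suc (Suc m)). bdV V (Suc (Suc m)) e = z"
proof -
  define N where "N = {x\<in>V. x \<noteq> v \<and> E v x}"
  have uv: "u \<noteq> v" and wv: "w \<noteq> v" using nu nw refl by auto
  have "N \<subseteq> V - {v, u, w}" using nu nw unfolding N_def by auto
  then have "card N \<le> card (V - {v, u, w})" using fV by (simp add: card_mono)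
  moreover have "card (V - {v, u, w}) = card V - 3" using uV vV wV uv wv uw fV
    by (simp add: card_Diff_subset)
  ultimately have cN: "card N \<le> 2*m+1" using cV by simp
  have fN: "finite N" using fV unfolding N_def by simp
  have c2: "card (V - {v}) \<le> 2 * Suc m + 1" using cV vV fV by simp
  have HH: "(\<forall>a\<in>(ch N E m :: ('v set \<Rightarrow> 'a) set). bdV N m a = (\<lambda>_. 0) \<longrightarrow>
              (\<exists>a'\<in>ch N E (Suc m). bdV N (Suc m) a' = a)) \<and>
           (\<forall>y\<in>(ch (V - {v}) E (Suc m) :: ('v set \<Rightarrow> 'a) set). bdV (V - {v}) (Suc m) y = (\<lambda>_. 0) \<longrightarrow>
              (\<exists>e\<in>ch (V - {v}) E (Suc (Suc m)). bdV (V - {v}) (Suc (Suc m)) e = y))"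
  proof (intro conjI ballI impI)
    fix a :: "'v set \<Rightarrow> 'a" assume "a \<in> ch N E m" "bdV N m a = (\<lambda>_. 0)"
    then show "\<exists>a'\<in>ch N E (Suc m). bdV N (Suc m) a' = a"
      using vanish[where E=E and k=m, OF sym refl, rule_format, OF fN cN] by blast
  next
    have fV': "finite (V - {v})" using fV by simp
    fix y :: "'v set \<Rightarrow> 'a" assume "y \<in> ch (V - {v}) E (Suc m)" "bdV (V - {v}) (Suc m) y = (\<lambda>_. 0)"
    then show "\<exists>e\<in>ch (V - {v}) E (Suc (Suc m)). bdV (V - {v}) (Suc (Suc m)) e = y"
      using vanish[where E=E and k="Suc m", OF sym refl, rule_format, OF fV' c2] by blast
  qed
  show ?thesis
    by (intro step[OF fV vV sym refl zc zb]) (rule disjI2, insert HH, simp only: N_def)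
qed



definition KE :: "'v set \<Rightarrow> ('v \<Rightarrow> 'v \<Rightarrow> bool) \<Rightarrow> 'v set set" where
  "KE X E = {\<sigma>. \<sigma> \<subseteq> X \<and> finite \<sigma> \<and> \<sigma> \<noteq> {} \<and> (\<forall>x\<in>\<sigma>. \<forall>y\<in>\<sigma>. E x y)}"

lemma chains_eq: "chains F (KE X E) n = ch X E n"
proof -
  have "(\<sigma> \<in> KE X E \<and> card \<sigma> = Suc n) = (\<sigma> \<subseteq> X \<and> card \<sigma> = Suc n \<and> (\<forall>x\<in>\<sigma>. \<forall>y\<in>\<sigma>. E x y))" for \<sigma>
  proof
    assume h: "\<sigma> \<subseteq> X \<and> card \<sigma> = Suc n \<and> (\<forall>x\<in>\<sigma>. \<forall>y\<in>\<sigma>. E x y)"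
    then have "finite \<sigma>" by (metis card.infinite nat.distinct(1))
    moreover have "\<sigma> \<noteq> {}" using h by auto
    ultimately show "\<sigma> \<in> KE X E \<and> card \<sigma> = Suc n" using h unfolding KE_def by blast
  qed (auto simp: KE_def)
  then show ?thesis unfolding chains_def ch_def by simp
qed

lemma bd_eq:
  fixes c :: "'v::linorder set \<Rightarrow> 'a::field"
  assumes fX: "finite X" and c: "c \<in> ch X E n" and n: "n \<ge> 1"
  shows "bd (KE X E) n c = bdV X n c"
proof
  fix \<tau>
  let ?K = "KE X E"
  have cK: "c \<sigma> \<noteq> 0 \<Longrightarrow> \<sigma> \<in> ?K" for \<sigma>
    using c chains_eq[of "TYPE('a)" X E n] unfolding chains_def by blast
  show "bd ?K n c \<tau> = bdV X n c \<tau>"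
  proof (cases "\<tau> \<in> ?K \<and> card \<tau> = n")
    case True
    then have tX: "\<tau> \<subseteq> X" and ft: "finite \<tau>" and ct: "card \<tau> = n" unfolding KE_def by auto
    define S where "S = {\<sigma>\<in>?K. card \<sigma> = Suc n \<and> \<tau> \<subseteq> \<sigma>}"
    define T where "T = {x\<in>X-\<tau>. insert x \<tau> \<in> ?K}"
    have ST: "S = (\<lambda>x. insert x \<tau>) ` T"
    proof
      show "(\<lambda>x. insert x \<tau>) ` T \<subseteq> S"
        unfolding S_def T_def using ft ct by auto
      show "S \<subseteq> (\<lambda>x. insert x \<tau>) ` T"
      proof
        fix \<sigma> assume "\<sigma> \<in> S"
        then have sK: "\<sigma> \<in> ?K" and cs: "card \<sigma> = Suc n" and ts: "\<tau> \<subseteq> \<sigma>" unfolding S_def by auto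
        have "card (\<sigma> - \<tau>) = 1" using card_Diff_subset[OF ft ts] cs ct by simp
        then obtain x where sx: "\<sigma> - \<tau> = {x}" by (rule card_1_singletonE)
        then have se: "\<sigma> = insert x \<tau>" and xt: "x \<notin> \<tau>" using ts by auto
        have "x \<in> X" using sK se unfolding KE_def by auto
        then show "\<sigma> \<in> (\<lambda>x. insert x \<tau>) ` T" using se xt sK unfolding T_def by auto
      qed
    qed
    have inj: "inj_on (\<lambda>x. insert x \<tau>) T"
      unfolding T_def inj_on_def by blast
    have "bd ?K n c \<tau> = (\<Sum>\<sigma>\<in>S. (-1) ^ card {w\<in>\<sigma>. w < the_elem (\<sigma> - \<tau>)} * c \<sigma>)"
      using True unfolding bd_def S_def by simp
    also have "\<dots> = (\<Sum>x\<in>T. (-1) ^ card {w\<in>insert x \<tau>. w < the_elem (insert x \<tau> - \<tau>)} * c (insert x \<tau>))"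
      unfolding ST by (simp add: sum.reindex[OF inj])
    also have "\<dots> = (\<Sum>x\<in>T. sg \<tau> x * c (insert x \<tau>))"
    proof (rule sum.cong)
      fix x assume "x \<in> T"
      then have "insert x \<tau> - \<tau> = {x}" unfolding T_def by auto
      show "(-1) ^ card {w\<in>insert x \<tau>. w < the_elem (insert x \<tau> - \<tau>)} * c (insert x \<tau>)
          = sg \<tau> x * c (insert x \<tau>)"
      proof -
        have "{w\<in>insert x \<tau>. w < x} = {w\<in>\<tau>. w < x}" by auto
        then show ?thesis using \<open>insert x \<tau> - \<tau> = {x}\<close> unfolding sg_def by simp
      qed
    qed simp
    also have "\<dots> = (\<Sum>x\<in>X-\<tau>. sg \<tau> x * c (insert x \<tau>))"
    proof (rule sum.mono_neutral_left)
      show "finite (X - \<tau>)" using fX by simp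
      show "T \<subseteq> X - \<tau>" unfolding T_def by auto
      show "\<forall>i\<in>X - \<tau> - T. sg \<tau> i * c (insert i \<tau>) = 0"
        using cK unfolding T_def by auto
    qed
    also have "\<dots> = bdV X n c \<tau>" using tX ct unfolding bdV_def by simp
    finally show ?thesis .
  next
    case False
    have "bd ?K n c \<tau> = 0" unfolding bd_def using False by (rule if_not_P)
    moreover have "bdV X n c \<tau> = 0"
    proof (cases "\<tau> \<subseteq> X \<and> card \<tau> = n")
      case True
      then have "finite \<tau>" using fX finite_subset by blast
      moreover have "\<tau> \<noteq> {}" using True n by auto
      ultimately have "\<tau> \<notin> ?K" using True False by simp
      then have "\<not> (\<forall>x\<in>\<tau>. \<forall>y\<in>\<tau>. E x y)" using True \<open>finite \<tau>\<close> \<open>\<tau> \<noteq> {}\<close> unfolding KE_def by blast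
      then have "\<And>x. insert x \<tau> \<notin> ?K" unfolding KE_def by blast
      then have "\<And>x. c (insert x \<tau>) = 0" using cK by blast
      then show ?thesis unfolding bdV_def by simp
    next
      case False
      then show ?thesis unfolding bdV_def by (rule if_not_P)
    qed
    ultimately show ?thesis by simp
  qed
qed

lemma bd_zero: "bd K n (\<lambda>_. 0::'a::field) = (\<lambda>_. 0)"
  unfolding bd_def by (rule ext) simp

lemma hif_witness:
  fixes F :: "'a::field itself" and E :: "'v::linorder \<Rightarrow> 'v \<Rightarrow> bool"
  assumes fX: "finite X" and h: "homology_iso_field F (KE X E) (Suc m)"
  shows "\<exists>z::'v set \<Rightarrow> 'a. z \<in> ch X E (Suc m) \<and> bdV X (Suc m) z = (\<lambda>_. 0) \<and>
           \<not> (\<exists>e\<in>ch X E (Suc (Suc m)). bdV X (Suc (Suc m)) e = z)"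
proof -
  from h obtain z :: "'v set \<Rightarrow> 'a" where zc: "z \<in> cycles F (KE X E) (Suc m)"
    and zn: "z \<notin> boundaries F (KE X E) (Suc m)"
    unfolding homology_iso_field_def by blast
  have zch: "z \<in> ch X E (Suc m)" using zc unfolding cycles_def chains_eq by simp
  have zb: "bdV X (Suc m) z = (\<lambda>_. 0)" using zc bd_eq[OF fX zch] unfolding cycles_def by simp
  have "\<not> (\<exists>e\<in>ch X E (Suc (Suc m)). bdV X (Suc (Suc m)) e = z)"
  proof
    assume "\<exists>e\<in>ch X E (Suc (Suc m)). bdV X (Suc (Suc m)) e = z"
    then obtain e where ec: "e \<in> ch X E (Suc (Suc m))" and eb: "bdV X (Suc (Suc m)) e = z" by blast
    have "bd (KE X E) (Suc (Suc m)) e = z" using bd_eq[OF fX ec] eb by simp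
    then have "z \<in> boundaries F (KE X E) (Suc m)"
      unfolding boundaries_def chains_eq using ec by (metis image_eqI)
    then show False using zn by simp
  qed
  then show ?thesis using zch zb by blast
qed



definition Eg :: "(real \<Rightarrow> 'v \<Rightarrow> 'v \<Rightarrow> real) \<Rightarrow> dyn \<Rightarrow> 'v \<Rightarrow> 'v \<Rightarrow> bool" where
  "Eg d p x y \<longleftrightarrow> x = y \<or> (interval_dist d (fst (fst p)) (snd (fst p)) x y \<le> snd p \<and>
      interval_dist d (fst (fst p)) (snd (fst p)) y x \<le> snd p)"

lemma Eg_refl: "Eg d p x x" unfolding Eg_def by simp
lemma Eg_sym: "Eg d p x y = Eg d p y x" unfolding Eg_def by auto

lemma idist_self:
  assumes "is_DMS X d" "x \<in> X" "a \<le> b"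
  shows "interval_dist d a b x x = 0"
proof -
  have "\<forall>t. d t x x = 0" using assms unfolding is_DMS_def pseudometric_on_def by blast
  then have "(\<lambda>t. d t x x) ` {a..b} = {0}" using assms(3) by auto
  then show ?thesis unfolding interval_dist_def by simp
qed

lemma idist_mono:
  assumes "is_DMS X d" "x \<in> X" "y \<in> X" "a \<le> b" "{a..b} \<subseteq> {a'..b'}"
  shows "interval_dist d a' b' x y \<le> interval_dist d a b x y"
  unfolding interval_dist_def
proof (rule cInf_superset_mono)
  show "(\<lambda>t. d t x y) ` {a..b} \<noteq> {}" using assms(4) by simp
  have "\<forall>t. 0 \<le> d t x y" using assms unfolding is_DMS_def pseudometric_on_def by blast
  then show "bdd_below ((\<lambda>t. d t x y) ` {a'..b'})" by (intro bdd_belowI[of _ 0]) auto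
  show "(\<lambda>t. d t x y) ` {a..b} \<subseteq> (\<lambda>t. d t x y) ` {a'..b'}" using assms(5) by auto
qed

lemma rips_KE:
  assumes "\<And>x. x \<in> X \<Longrightarrow> D x x \<le> \<delta>"
  shows "rips X D \<delta> = KE X (\<lambda>x y. x = y \<or> (D x y \<le> \<delta> \<and> D y x \<le> \<delta>))"
  unfolding rips_def KE_def
proof (intro Collect_cong iffI)
  fix \<sigma> assume "\<sigma> \<subseteq> X \<and> finite \<sigma> \<and> \<sigma> \<noteq> {} \<and> (\<forall>x\<in>\<sigma>. \<forall>y\<in>\<sigma>. D x y \<le> \<delta>)"
  then show "\<sigma> \<subseteq> X \<and> finite \<sigma> \<and> \<sigma> \<noteq> {} \<and> (\<forall>x\<in>\<sigma>. \<forall>y\<in>\<sigma>. x = y \<or> (D x y \<le> \<delta> \<and> D y x \<le> \<delta>))"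
    by simp
next
  fix \<sigma> assume h: "\<sigma> \<subseteq> X \<and> finite \<sigma> \<and> \<sigma> \<noteq> {} \<and> (\<forall>x\<in>\<sigma>. \<forall>y\<in>\<sigma>. x = y \<or> (D x y \<le> \<delta> \<and> D y x \<le> \<delta>))"
  have "\<forall>x\<in>\<sigma>. \<forall>y\<in>\<sigma>. D x y \<le> \<delta>"
  proof (intro ballI)
    fix x y assume "x \<in> \<sigma>" "y \<in> \<sigma>"
    then show "D x y \<le> \<delta>" using h assms by (cases "x = y") auto
  qed
  then show "\<sigma> \<subseteq> X \<and> finite \<sigma> \<and> \<sigma> \<noteq> {} \<and> (\<forall>x\<in>\<sigma>. \<forall>y\<in>\<sigma>. D x y \<le> \<delta>)" using h by simp
qed

lemma rips_eq:
  assumes "is_DMS X d" "dyn_point p"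
  shows "rips_lev X d p = KE X (Eg d p)"
proof -
  have self: "x \<in> X \<Longrightarrow> interval_dist d (fst (fst p)) (snd (fst p)) x x \<le> snd p" for x
    using idist_self[OF assms(1), of x] assms(2) unfolding dyn_point_def by simp
  have e: "Eg d p = (\<lambda>x y. x = y \<or> (interval_dist d (fst (fst p)) (snd (fst p)) x y \<le> snd p \<and>
      interval_dist d (fst (fst p)) (snd (fst p)) y x \<le> snd p))"
    unfolding Eg_def by (intro ext) simp
  show ?thesis unfolding rips_lev_def e by (rule rips_KE) (rule self)
qed

lemma induced_iso_same: "induced_iso F K K n"
  unfolding induced_iso_def
proof (intro conjI ballI impI)
  fix w assume "w \<in> cycles F K n"
  have "(\<lambda>\<sigma>. w \<sigma> - w \<sigma>) = bd K (Suc n) (\<lambda>_. 0)" by (simp add: bd_zero)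
  moreover have "(\<lambda>_. 0) \<in> chains F K (Suc n)" unfolding chains_def by simp
  ultimately have "(\<lambda>\<sigma>. w \<sigma> - w \<sigma>) \<in> boundaries F K n" unfolding boundaries_def by blast
  then show "\<exists>z\<in>cycles F K n. (\<lambda>\<sigma>. w \<sigma> - z \<sigma>) \<in> boundaries F K n" using \<open>w \<in> cycles F K n\<close> by blast
qed



lemma k0_edge:
  fixes F :: "'a::field itself" and E :: "'v::linorder \<Rightarrow> 'v \<Rightarrow> bool"
  assumes X: "X = {x, y}" and xy: "x \<noteq> y" and refl: "\<And>u. E u u"
    and h: "homology_iso_field F (KE X E) 0"
  shows "E x y"
proof (rule ccontr)
  assume nE: "\<not> E x y"
  let ?K = "KE X E"
  have fX: "finite X" using X by simp
  from h obtain z :: "'v set \<Rightarrow> 'a" where zc: "z \<in> cycles F ?K 0"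
    and zn: "z \<notin> boundaries F ?K 0"
    and all: "\<forall>w\<in>cycles F ?K 0. \<exists>r::'a. (\<lambda>\<sigma>. w \<sigma> - r * z \<sigma>) \<in> boundaries F ?K 0"
    unfolding homology_iso_field_def by blast
  have bnd: "b \<in> boundaries F ?K 0 \<Longrightarrow> b = (\<lambda>_. 0)" for b :: "'v set \<Rightarrow> 'a"
  proof -
    assume "b \<in> boundaries F ?K 0"
    then obtain c where cc: "c \<in> ch X E 1" and bc: "b = bd ?K 1 c"
      unfolding boundaries_def chains_eq by auto
    have "c = (\<lambda>_. 0)"
    proof
      fix \<sigma> show "c \<sigma> = 0"
      proof (rule ccontr)
        assume "c \<sigma> \<noteq> 0"
        from ch_supp[OF cc this] have s1: "\<sigma> \<subseteq> X" and s2: "card \<sigma> = 2"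
          and s3: "\<forall>u\<in>\<sigma>. \<forall>v\<in>\<sigma>. E u v" by auto
        have "card X = 2" using X xy by simp
        then have "\<sigma> = X" using card_subset_eq[OF fX s1] s2 by simp
        then have "E x y" using s3 X by blast
        then show False using nE by simp
      qed
    qed
    then show "b = (\<lambda>_. 0)" using bc bd_zero by simp
  qed
  have "(\<lambda>_. 0::'a) \<in> chains F ?K 1" unfolding chains_def by simp
  then have "bd ?K 1 (\<lambda>_. 0::'a) \<in> boundaries F ?K 0" unfolding boundaries_def by simp
  then have zero_bnd: "(\<lambda>_. 0::'a) \<in> boundaries F ?K 0" by (simp add: bd_zero)
  have cyc: "c \<in> ch X E 0 \<Longrightarrow> c \<in> cycles F ?K 0" for c :: "'v set \<Rightarrow> 'a"
  proof -
    assume c: "c \<in> ch X E 0"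
    have "bd ?K 0 c = (\<lambda>_. 0)"
    proof
      fix \<tau>
      have "\<tau> \<in> ?K \<Longrightarrow> card \<tau> \<noteq> 0" unfolding KE_def by simp
      then have "\<not> (\<tau> \<in> ?K \<and> card \<tau> = 0)" by blast
      then show "bd ?K 0 c \<tau> = 0" unfolding bd_def by (rule if_not_P)
    qed
    then show ?thesis using c unfolding cycles_def chains_eq by simp
  qed
  have zch: "z \<in> ch X E 0" using zc unfolding cycles_def chains_eq by simp
  have w_ch: "(\<lambda>\<sigma>. if \<sigma> = {u} then 1 else 0 :: 'a) \<in> ch X E 0" if "u \<in> X" for u
    unfolding ch_def using that refl by simp
  have zval: "z {v} = 0" if vX: "v \<in> X" and uX: "u \<in> X" and uv: "u \<noteq> v" for u v
  proof -
    obtain r :: 'a where "(\<lambda>\<sigma>. (if \<sigma> = {u} then 1 else 0) - r * z \<sigma>) \<in> boundaries F ?K 0"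
      using all[rule_format, OF cyc[OF w_ch[OF uX]]] by blast
    then have e: "(\<lambda>\<sigma>. (if \<sigma> = {u} then 1 else 0) - r * z \<sigma>) = (\<lambda>_. 0)" by (rule bnd)
    have "1 - r * z {u} = 0" using fun_cong[OF e, of "{u}"] by simp
    then have "r \<noteq> 0" by auto
    moreover have "- (r * z {v}) = 0" using fun_cong[OF e, of "{v}"] uv by simp
    ultimately show "z {v} = 0" by simp
  qed
  have "z = (\<lambda>_. 0)"
  proof
    fix \<sigma> show "z \<sigma> = 0"
    proof (rule ccontr)
      assume nz: "z \<sigma> \<noteq> 0"
      from ch_supp[OF zch nz] have s1: "\<sigma> \<subseteq> X" and s2: "card \<sigma> = 1" by auto
      from s2 obtain u where su: "\<sigma> = {u}" by (rule card_1_singletonE)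
      then have "u \<in> X" using s1 by simp
      then have "u = x \<or> u = y" using X by simp
      then show False
      proof
        assume "u = x"
        have "z {x} = 0" by (rule zval[of x y]) (use X xy in auto)
        then show False using nz su \<open>u = x\<close> by simp
      next
        assume "u = y"
        have "z {y} = 0" by (rule zval[of y x]) (use X xy in auto)
        then show False using nz su \<open>u = y\<close> by simp
      qed
    qed
  qed
  then show False using zn zero_bnd by simp
qed

theorem mainTheorem1:
  fixes F :: "'a::field itself"
    and X :: "'v::linorder set"
    and d :: "real \<Rightarrow> 'v \<Rightarrow> 'v \<Rightarrow> real"
    and k :: nat
    and p q :: dyn
  assumes "is_DMS X d"
    and "card X = 2 * k + 2"
    and "in_supp F X d k p"
    and "in_supp F X d k q"
    and "dyn_le p q"
  shows "rips_lev X d p = rips_lev X d q \<and> induced_iso F (rips_lev X d p) (rips_lev X d q) k"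
proof -
  note DMS = assms(1) and cX = assms(2)
  have fX: "finite X" using DMS unfolding is_DMS_def by simp
  have dp: "dyn_point p" and dq: "dyn_point q" using assms(3,4) unfolding in_supp_def by auto
  have Rp: "rips_lev X d p = KE X (Eg d p)" by (rule rips_eq[OF DMS dp])
  have Rq: "rips_lev X d q = KE X (Eg d q)" by (rule rips_eq[OF DMS dq])
  have hp: "homology_iso_field F (KE X (Eg d p)) k" using assms(3) Rp unfolding in_supp_def by simp
  have hq: "homology_iso_field F (KE X (Eg d q)) k" using assms(4) Rq unfolding in_supp_def by simp
  have mono: "Eg d q x y" if "x \<in> X" "y \<in> X" "Eg d p x y" for x y
  proof -
    have ab: "fst (fst p) \<le> snd (fst p)" and sub: "{fst (fst p)..snd (fst p)} \<subseteq> {fst (fst q)..snd (fst q)}"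
      and dl: "snd p \<le> snd q"
      using dp assms(5) unfolding dyn_point_def dyn_le_def by auto
    have m1: "interval_dist d (fst (fst q)) (snd (fst q)) x y \<le> interval_dist d (fst (fst p)) (snd (fst p)) x y"
      by (rule idist_mono[OF DMS that(1,2) ab sub])
    have m2: "interval_dist d (fst (fst q)) (snd (fst q)) y x \<le> interval_dist d (fst (fst p)) (snd (fst p)) y x"
      by (rule idist_mono[OF DMS that(2,1) ab sub])
    show ?thesis using that(3) m1 m2 dl unfolding Eg_def by auto
  qed
  have eqE: "Eg d p x y = Eg d q x y" if xX: "x \<in> X" and yX: "y \<in> X" for x y
  proof (cases k)
    case 0
    then have "card X = 2" using cX by simp
    then obtain a b where X: "X = {a, b}" and ab: "a \<noteq> b" by (auto simp: card_2_iff)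
    have hp0: "homology_iso_field F (KE X (Eg d p)) 0" using hp 0 by simp
    have Eab: "Eg d p a b" by (rule k0_edge[OF X ab Eg_refl hp0])
    have Eabq: "Eg d q a b" using mono[OF _ _ Eab] X by simp
    have "x = y \<or> (x = a \<and> y = b) \<or> (x = b \<and> y = a)" using xX yX X by auto
    then show ?thesis using Eab Eabq Eg_refl[of d p] Eg_refl[of d q] Eg_sym[of d p] Eg_sym[of d q]
      by auto
  next
    case (Suc m)
    have cX': "card X = 2 * Suc m + 2" using cX Suc by simp
    have hq': "homology_iso_field F (KE X (Eg d q)) (Suc m)" using hq Suc by simp
    have hp': "homology_iso_field F (KE X (Eg d p)) (Suc m)" using hp Suc by simp
    obtain zq :: "'v set \<Rightarrow> 'a" where zqc: "zq \<in> ch X (Eg d q) (Suc m)"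
      and zqb: "bdV X (Suc m) zq = (\<lambda>_. 0)"
      and zqn: "\<not> (\<exists>e\<in>ch X (Eg d q) (Suc (Suc m)). bdV X (Suc (Suc m)) e = zq)"
      using hif_witness[OF fX hq'] by blast
    obtain zp :: "'v set \<Rightarrow> 'a" where zpc: "zp \<in> ch X (Eg d p) (Suc m)"
      and zpb: "bdV X (Suc m) zp = (\<lambda>_. 0)"
      and zpn: "\<not> (\<exists>e\<in>ch X (Eg d p) (Suc (Suc m)). bdV X (Suc (Suc m)) e = zp)"
      using hif_witness[OF fX hp'] by blast
    have claim1: "\<exists>u\<in>X. u \<noteq> v \<and> \<not> Eg d q v u" if vX: "v \<in> X" for v
    proof (rule ccontr)
      assume "\<not> (\<exists>u\<in>X. u \<noteq> v \<and> \<not> Eg d q v u)"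
      then have adj: "\<forall>x\<in>X - {v}. Eg d q v x" by blast
      show False
        using all_bd_cone[where E="Eg d q", OF fX vX Eg_sym Eg_refl adj zqc zqb] zqn by blast
    qed
    have claim2: False if vX: "v \<in> X" and uX: "u \<in> X" and wX: "w \<in> X" and uw: "u \<noteq> w"
      and nu: "\<not> Eg d p v u" and nw: "\<not> Eg d p v w" for v u w
      using all_bd_two[where E="Eg d p" and m=m, OF fX cX' vX Eg_sym Eg_refl uX wX uw nu nw zpc zpb] zpn
      by blast
    show ?thesis
    proof
      assume "Eg d p x y" then show "Eg d q x y" using mono xX yX by blast
    next
      assume q: "Eg d q x y"
      show "Eg d p x y"
      proof (rule ccontr)
        assume np: "\<not> Eg d p x y"
        obtain u where uX: "u \<in> X" and ux: "u \<noteq> x" and nq: "\<not> Eg d q x u" using claim1[OF xX] by blast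
        have npu: "\<not> Eg d p x u" using nq mono xX uX by blast
        show False
        proof (cases "u = y")
          case True then show False using nq q by simp
        next
          case False show False using claim2[OF xX uX yX False npu np] .
        qed
      qed
    qed
  qed
  have "KE X (Eg d p) = KE X (Eg d q)"
    unfolding KE_def
  proof (intro Collect_cong)
    fix \<sigma> show "(\<sigma> \<subseteq> X \<and> finite \<sigma> \<and> \<sigma> \<noteq> {} \<and> (\<forall>x\<in>\<sigma>. \<forall>y\<in>\<sigma>. Eg d p x y)) =
        (\<sigma> \<subseteq> X \<and> finite \<sigma> \<and> \<sigma> \<noteq> {} \<and> (\<forall>x\<in>\<sigma>. \<forall>y\<in>\<sigma>. Eg d q x y))"
      using eqE by blast
  qed
  then have R: "rips_lev X d p = rips_lev X d q" using Rp Rq by simp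
  show ?thesis using R induced_iso_same by simp
qed

end
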